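(* Let $\varrho=\rho_1\otimes\cdots\otimes\rho_n$ be a product state on $\mathcal K=\bigotimes_{i=1}^n\mathcal H_i$ (finite-dimensional Hilbert spaces), let $X$ be an observable on $\mathcal K$, and let $i\in[n]$. Then $$\mathbb E_\varrho[(\mathcal D_iX)^2]=\mathbb E_{\varrho\otimes\varrho}\Big[\tfrac12\big(X\otimes I-F_i(X\otimes I)F_i\big)^2\Big]=\mathbb E_\varrho[X^2]-\mathbb E_{\varrho\otimes\varrho}\big[(X\otimes I)F_i(X\otimes I)F_i\big].$$
   Context: For a state $\tau$ and operator $Y$, $\mathbb E_\tau[Y]=\mathrm{Tr}[\tau Y]$. For $i\in[n]$, $\mathcal E_i$ is the linear map on operators on $\mathcal K$ given by $\mathcal E_iX=\mathrm{Tr}_i[(\rho_i\otimes I)X]$, regarded as an operator on $\mathcal K$ by tensoring with the identity on $\mathcal H_i$ (i.e., on product operators, $\mathcal E_i(Y_1\otimes\cdots\otimes Y_n)=\mathrm{Tr}[\rho_iY_i]\,Y_1\otimes\cdots\otimes I_{\mathcal H_i}\otimes\cdots\otimes Y_n$), and $\mathcal D_iX=X-\mathcal E_iX$. $F_i$ is the swap operator on $\mathcal K\otimes\mathcal K$ exchanging the $i$th tensor component of the first copy of $\mathcal K$ with the $i$th tensor component of the second copy. *)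

theory Defs
  imports "HOL-Analysis.Analysis"
begin

text \<open>Subsystems are indexed by i < n (so [n] = {0..<n}); subsystem i has
dimension d i with standard basis indexed by {..<d i}. A basis vector of
K = H_0 (x) ... (x) H_(n-1) is a multi-index x in Idx d n. Operators on a space with basis
index set S are matrices, i.e. functions S -> S -> complex (values outside S irrelevant).\<close>

type_synonym midx = "nat \<Rightarrow> nat"
type_synonym 'a op = "'a \<Rightarrow> 'a \<Rightarrow> complex"

definition Idx :: "(nat \<Rightarrow> nat) \<Rightarrow> nat \<Rightarrow> midx set" where
  "Idx d n = PiE {..<n} (\<lambda>i. {..<d i})"

definition mmult :: "'a set \<Rightarrow> 'a op \<Rightarrow> 'a op \<Rightarrow> 'a op" where
  "mmult S A B = (\<lambda>x y. \<Sum>z\<in>S. A x z * B z y)"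

definition mtrace :: "'a set \<Rightarrow> 'a op \<Rightarrow> complex" where
  "mtrace S A = (\<Sum>x\<in>S. A x x)"

definition expect :: "'a set \<Rightarrow> 'a op \<Rightarrow> 'a op \<Rightarrow> complex" where
  "expect S tau Y = mtrace S (mmult S tau Y)"

definition hermitian_on :: "'a set \<Rightarrow> 'a op \<Rightarrow> bool" where
  "hermitian_on S A \<longleftrightarrow> (\<forall>x\<in>S. \<forall>y\<in>S. A x y = cnj (A y x))"

definition psd_on :: "'a set \<Rightarrow> 'a op \<Rightarrow> bool" where
  "psd_on S A \<longleftrightarrow> hermitian_on S A \<and>
     (\<forall>v. 0 \<le> Re (\<Sum>x\<in>S. \<Sum>y\<in>S. cnj (v x) * A x y * v y))"

definition density_on :: "'a set \<Rightarrow> 'a op \<Rightarrow> bool" where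
  "density_on S A \<longleftrightarrow> psd_on S A \<and> mtrace S A = 1"

definition prod_state :: "nat \<Rightarrow> (nat \<Rightarrow> nat op) \<Rightarrow> midx op" where
  "prod_state n rho = (\<lambda>x y. \<Prod>i<n. rho i (x i) (y i))"

text \<open>E_i X = Tr_i[(rho_i (x) I) X], tensored with I on H_i.\<close>
definition cond_exp :: "(nat \<Rightarrow> nat) \<Rightarrow> (nat \<Rightarrow> nat op) \<Rightarrow> nat \<Rightarrow> midx op \<Rightarrow> midx op" where
  "cond_exp d rho i X = (\<lambda>x y. if x i = y i then
      (\<Sum>a<d i. \<Sum>c<d i. rho i a c * X (x(i := c)) (y(i := a))) else 0)"

definition diff_op :: "(nat \<Rightarrow> nat) \<Rightarrow> (nat \<Rightarrow> nat op) \<Rightarrow> nat \<Rightarrow> midx op \<Rightarrow> midx op" where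
  "diff_op d rho i X = (\<lambda>x y. X x y - cond_exp d rho i X x y)"

definition tensor_op :: "'a op \<Rightarrow> 'b op \<Rightarrow> ('a \<times> 'b) op" where
  "tensor_op A B = (\<lambda>(x, y) (x', y'). A x x' * B y y')"

definition id_op :: "'a op" where
  "id_op = (\<lambda>x y. if x = y then 1 else 0)"

text \<open>F_i swaps the i-th factor of the first copy of K with the i-th factor of the second.\<close>
definition swap_op :: "nat \<Rightarrow> (midx \<times> midx) op" where
  "swap_op i = (\<lambda>(x, y) (x', y'). if x' = x(i := y i) \<and> y' = y(i := x i) then 1 else 0)"

end

theory Submission
  imports Defs
begin

locale pst =
  fixes n :: nat and d :: "nat \<Rightarrow> nat" and rho :: "nat \<Rightarrow> nat op" and i :: nat
  assumes i: "i < n" and tr: "\<And>j. j < n \<Longrightarrow> (\<Sum>a<d j. rho j a a) = 1"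
begin

definition "K = Idx d n"
definition "A = {..<d i}"
definition "B = Idx (d(i:=1)) n"
definition "tau u v = (\<Prod>j\<in>{..<n}-{i}. rho j (u j) (v j))"
definition "sw p = ((fst p)(i := snd p i), (snd p)(i := fst p i))"
definition "sig = prod_state n rho"

lemma finK: "finite K" unfolding K_def Idx_def by (auto intro: finite_PiE)
lemma finB: "finite B" unfolding B_def Idx_def by (auto intro: finite_PiE)
lemma finA: "finite A" unfolding A_def by auto

lemma upd_PiE: assumes "x \<in> PiE S T" "i \<in> S" "a \<in> T' i" "\<And>j. j \<in> S \<Longrightarrow> j \<noteq> i \<Longrightarrow> x j \<in> T' j"
  shows "x(i:=a) \<in> PiE S T'"
proof -
  have "x \<in> extensional S" using assms(1) by (simp add: PiE_iff)
  then have "x(i:=a) \<in> extensional S" using assms(2) by (simp add: extensional_def)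
  moreover have "\<forall>j\<in>S. (x(i:=a)) j \<in> T' j" using assms(3,4) by simp
  ultimately show ?thesis by (simp add: PiE_iff)
qed

lemma B_mem: "u \<in> B \<Longrightarrow> j < n \<Longrightarrow> u j < (d(i:=1)) j"
  using PiE_mem[of u "{..<n}" "\<lambda>j. {..<(d(i:=1)) j}" j] unfolding B_def Idx_def by auto

lemma K_mem: "x \<in> K \<Longrightarrow> j < n \<Longrightarrow> x j < d j"
  using PiE_mem[of x "{..<n}" "\<lambda>j. {..<d j}" j] unfolding K_def Idx_def by auto

lemma B_i: "u \<in> B \<Longrightarrow> u i = 0"
  using B_mem[of u i] i by simp

lemma upd_K: "u \<in> B \<Longrightarrow> a \<in> A \<Longrightarrow> u(i:=a) \<in> K"
  unfolding K_def Idx_def A_def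
proof (rule upd_PiE[of _ _ "\<lambda>j. {..<(d(i:=1)) j}"])
  assume u: "u \<in> B"
  then show "u \<in> (\<Pi>\<^sub>E j\<in>{..<n}. {..<(d(i := 1)) j})" by (simp add: B_def Idx_def)
  show "i \<in> {..<n}" using i by simp
  assume "a \<in> {..<d i}" then show "a \<in> {..<d i}" .
  fix j assume "j \<in> {..<n}" "j \<noteq> i" then show "u j \<in> {..<d j}" using B_mem[OF u, of j] by simp
qed

lemma upd_inj: "u \<in> B \<Longrightarrow> v \<in> B \<Longrightarrow> u(i:=a) = v(i:=b) \<Longrightarrow> u = v \<and> a = b"
proof
  assume uv: "u \<in> B" "v \<in> B" and e: "u(i:=a) = v(i:=b)"
  show "a = b" using fun_cong[OF e, of i] by simp
  show "u = v"
  proof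
    fix j show "u j = v j" using fun_cong[OF e, of j] B_i[OF uv(1)] B_i[OF uv(2)] by (cases "j = i") auto
  qed
qed

lemma K_upd: "x \<in> K \<Longrightarrow> a \<in> A \<Longrightarrow> x(i:=a) \<in> K"
  unfolding K_def Idx_def A_def
  by (rule upd_PiE[of _ _ "\<lambda>j. {..<d j}"]) (use i K_mem in \<open>auto simp: K_def Idx_def\<close>)

lemma K_B: "x \<in> K \<Longrightarrow> x(i:=0) \<in> B"
  unfolding B_def Idx_def
  by (rule upd_PiE[of _ _ "\<lambda>j. {..<d j}"]) (use i K_mem in \<open>auto simp: K_def Idx_def\<close>)

lemma K_A: "x \<in> K \<Longrightarrow> x i \<in> A"
  using K_mem[of x i] i unfolding A_def by auto

lemma bij: "bij_betw (\<lambda>(a,u). u(i:=a)) (A \<times> B) K"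
proof (rule bij_betwI')
  fix p q assume "p \<in> A \<times> B" "q \<in> A \<times> B"
  then show "((case p of (a, u) \<Rightarrow> u(i := a)) = (case q of (a, u) \<Rightarrow> u(i := a))) = (p = q)"
    using upd_inj by (cases p; cases q) auto
next
  fix p assume "p \<in> A \<times> B" then show "(case p of (a, u) \<Rightarrow> u(i := a)) \<in> K"
    using upd_K by auto
next
  fix x assume "x \<in> K"
  then show "\<exists>p\<in>A \<times> B. x = (case p of (a, u) \<Rightarrow> u(i := a))"
    by (intro bexI[of _ "(x i, x(i:=0))"]) (auto simp: K_A K_B)
qed

lemma dec: "sum f K = (\<Sum>a\<in>A. \<Sum>u\<in>B. f (u(i:=a)))"
proof -
  have "sum f K = (\<Sum>p\<in>A\<times>B. f ((\<lambda>(a,u). u(i:=a)) p))"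
    using sum.reindex_bij_betw[OF bij, of f] by simp
  also have "\<dots> = (\<Sum>a\<in>A. \<Sum>u\<in>B. f (u(i:=a)))"
    unfolding sum.cartesian_product by (simp add: case_prod_unfold)
  finally show ?thesis .
qed

lemma sig_upd: "sig (x(i:=a)) (y(i:=b)) = rho i a b * tau x y"
proof -
  have "sig (x(i:=a)) (y(i:=b)) = rho i a b * (\<Prod>j\<in>{..<n}-{i}. rho j ((x(i:=a)) j) ((y(i:=b)) j))"
    unfolding sig_def prod_state_def using i by (subst prod.remove[of _ i]) auto
  also have "(\<Prod>j\<in>{..<n}-{i}. rho j ((x(i:=a)) j) ((y(i:=b)) j)) = tau x y"
    unfolding tau_def by (rule prod.cong) auto
  finally show ?thesis .
qed

lemma sig_eq: "sig x y = rho i (x i) (y i) * tau x y"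
  using sig_upd[of x "x i" y "y i"] by simp

lemma tau_upd: "tau (x(i:=a)) (y(i:=b)) = tau x y"
  unfolding tau_def by (rule prod.cong) auto

lemma tr_tau: "(\<Sum>u\<in>B. tau u u) = 1"
proof -
  let ?f = "\<lambda>j s. if j = i then 1 else rho j s s"
  have "(\<Prod>j<n. \<Sum>s\<in>{..<(d(i:=1)) j}. ?f j s) = (\<Sum>g\<in>PiE {..<n} (\<lambda>j. {..<(d(i:=1)) j}). \<Prod>j<n. ?f j (g j))"
    by (rule prod_sum_PiE) auto
  also have "\<dots> = (\<Sum>u\<in>B. tau u u)"
    unfolding B_def Idx_def tau_def using i
    by (intro sum.cong refl, subst prod.remove[of _ i]) (auto intro!: prod.cong)
  also have "(\<Prod>j<n. \<Sum>s\<in>{..<(d(i:=1)) j}. ?f j s) = 1"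
    using tr by (intro prod.neutral) auto
  finally show ?thesis by simp
qed

lemma tr_sig: "(\<Sum>x\<in>K. sig x x) = 1"
proof -
  have "(\<Prod>j<n. \<Sum>s\<in>{..<d j}. rho j s s) = (\<Sum>g\<in>PiE {..<n} (\<lambda>j. {..<d j}). \<Prod>j<n. rho j (g j) (g j))"
    by (rule prod_sum_PiE) auto
  then show ?thesis using tr unfolding K_def Idx_def sig_def prod_state_def by simp
qed

lemma trA: "(\<Sum>a\<in>A. rho i a a) = 1" using tr i unfolding A_def by simp


definition "Y X w u = (\<Sum>p\<in>A. \<Sum>c\<in>A. rho i p c * X (w(i:=c)) (u(i:=p)))"
definition "S X = (\<Sum>u\<in>B. \<Sum>v\<in>B. tau u v * (\<Sum>w\<in>B. Y X v w * Y X w u))"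

lemma ce: "cond_exp d rho i X (w(i:=e)) (u(i:=a)) = (if e = a then Y X w u else 0)"
  unfolding cond_exp_def Y_def A_def by simp

lemma expect_mm: "expect T s (mmult T P Q) = (\<Sum>x\<in>T. \<Sum>z\<in>T. s x z * (\<Sum>w\<in>T. P z w * Q w x))"
  unfolding expect_def mtrace_def mmult_def by (simp add: sum_distrib_left)

lemma sum_if0: "(\<Sum>x\<in>T. if P then f x else (0::complex)) = (if P then sum f T else 0)" by simp

lemma mult_if0: "(c::complex) * (if P then y else 0) = (if P then c * y else 0)" by simp

lemma if0_mult: "(if P then y else 0) * (c::complex) = (if P then y * c else 0)" by simp

lemma perm4b: "(\<Sum>a\<in>T. \<Sum>b\<in>T. \<Sum>c\<in>T. \<Sum>d\<in>T. f a b c d) = (\<Sum>a\<in>T. \<Sum>c\<in>T. \<Sum>d\<in>T. \<Sum>b\<in>T. f a b c d)"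
proof (rule sum.cong[OF refl])
  fix a
  have "(\<Sum>b\<in>T. \<Sum>c\<in>T. \<Sum>d\<in>T. f a b c d) = (\<Sum>c\<in>T. \<Sum>b\<in>T. \<Sum>d\<in>T. f a b c d)"
    by (rule sum.swap)
  also have "\<dots> = (\<Sum>c\<in>T. \<Sum>d\<in>T. \<Sum>b\<in>T. f a b c d)"
    by (rule sum.cong[OF refl], rule sum.swap)
  finally show "(\<Sum>b\<in>T. \<Sum>c\<in>T. \<Sum>d\<in>T. f a b c d) = (\<Sum>c\<in>T. \<Sum>d\<in>T. \<Sum>b\<in>T. f a b c d)" .
qed

lemma perm4c: "(\<Sum>a\<in>T. \<Sum>b\<in>T. \<Sum>c\<in>T. \<Sum>d\<in>T. f a b c d) = (\<Sum>d\<in>T. \<Sum>a\<in>T. \<Sum>b\<in>T. \<Sum>c\<in>T. f a b c d)"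
proof -
  have "(\<Sum>a\<in>T. \<Sum>b\<in>T. \<Sum>c\<in>T. \<Sum>d\<in>T. f a b c d) = (\<Sum>a\<in>T. \<Sum>d\<in>T. \<Sum>b\<in>T. \<Sum>c\<in>T. f a b c d)"
  proof (rule sum.cong[OF refl])
    fix a
    have "(\<Sum>b\<in>T. \<Sum>c\<in>T. \<Sum>d\<in>T. f a b c d) = (\<Sum>b\<in>T. \<Sum>d\<in>T. \<Sum>c\<in>T. f a b c d)"
      by (rule sum.cong[OF refl], rule sum.swap)
    also have "\<dots> = (\<Sum>d\<in>T. \<Sum>b\<in>T. \<Sum>c\<in>T. f a b c d)"
      by (rule sum.swap)
    finally show "(\<Sum>b\<in>T. \<Sum>c\<in>T. \<Sum>d\<in>T. f a b c d) = (\<Sum>d\<in>T. \<Sum>b\<in>T. \<Sum>c\<in>T. f a b c d)" .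
  qed
  also have "\<dots> = (\<Sum>d\<in>T. \<Sum>a\<in>T. \<Sum>b\<in>T. \<Sum>c\<in>T. f a b c d)" by (rule sum.swap)
  finally show ?thesis .
qed

lemma perm4: "(\<Sum>a\<in>T. \<Sum>b\<in>T. \<Sum>c\<in>T. \<Sum>d\<in>T. f a b c d) = (\<Sum>c\<in>T. \<Sum>a\<in>T. \<Sum>b\<in>T. \<Sum>d\<in>T. f a b c d)"
proof -
  have "(\<Sum>a\<in>T. \<Sum>b\<in>T. \<Sum>c\<in>T. \<Sum>d\<in>T. f a b c d) = (\<Sum>a\<in>T. \<Sum>c\<in>T. \<Sum>b\<in>T. \<Sum>d\<in>T. f a b c d)"
    by (rule sum.cong[OF refl], rule sum.swap)
  also have "\<dots> = (\<Sum>c\<in>T. \<Sum>a\<in>T. \<Sum>b\<in>T. \<Sum>d\<in>T. f a b c d)" by (rule sum.swap)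
  finally show ?thesis .
qed

lemma S_alt: "(\<Sum>a\<in>A. \<Sum>u\<in>B. \<Sum>b\<in>A. \<Sum>v\<in>B. rho i a b * tau u v * (\<Sum>w\<in>B. X (v(i:=b)) (w(i:=a)) * Y X w u)) = S X"
    unfolding S_def Y_def
    apply (simp add: sum_distrib_left sum_distrib_right sum.swap[of _ A B] mult_ac)
    apply (subst perm4)
    apply (simp add: mult_ac)
    done

lemma Y_upd: "Y X w (u(i:=a)) = Y X w u" unfolding Y_def by simp

lemma E1: "expect K sig (mmult K X (cond_exp d rho i X)) = S X"
proof -
  have "expect K sig (mmult K X (cond_exp d rho i X)) =
    (\<Sum>a\<in>A. \<Sum>u\<in>B. \<Sum>b\<in>A. \<Sum>v\<in>B. rho i a b * tau u v * (\<Sum>w\<in>B. X (v(i:=b)) (w(i:=a)) * Y X w u))"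
    unfolding expect_mm dec by (simp add: sig_upd ce mult_if0 sum_if0 sum.delta finA finB sum.swap[of _ A B] cong: sum.cong_simp)
  also have "\<dots> = S X"
    unfolding S_def Y_def
    apply (simp add: sum_distrib_left sum_distrib_right sum.swap[of _ A B] mult_ac)
    apply (subst perm4)
    apply (simp add: mult_ac)
    done
  finally show ?thesis .
qed

lemma E2: "expect K sig (mmult K (cond_exp d rho i X) X) = S X"
proof -
  have "expect K sig (mmult K (cond_exp d rho i X) X) =
    (\<Sum>a\<in>A. \<Sum>u\<in>B. \<Sum>b\<in>A. \<Sum>v\<in>B. rho i a b * tau u v * (\<Sum>w\<in>B. Y X v w * X (w(i:=b)) (u(i:=a))))"
    unfolding expect_mm dec by (simp add: sig_upd ce if0_mult sum_if0 sum.delta sum.delta' finA finB sum.swap[of _ A B] cong: sum.cong_simp)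
  also have "\<dots> = S X"
    unfolding S_def Y_def
    apply (simp add: sum_distrib_left sum_distrib_right sum.swap[of _ A B] mult_ac)
    apply (subst perm4b)
    apply (simp add: mult_ac)
    done
  finally show ?thesis .
qed

lemma E3: "expect K sig (mmult K (cond_exp d rho i X) (cond_exp d rho i X)) = S X"
proof -
  have "expect K sig (mmult K (cond_exp d rho i X) (cond_exp d rho i X)) =
    (\<Sum>a\<in>A. \<Sum>u\<in>B. \<Sum>v\<in>B. rho i a a * tau u v * (\<Sum>w\<in>B. Y X v w * Y X w u))"
    unfolding expect_mm dec by (simp add: sig_upd ce if0_mult mult_if0 sum_if0 sum.delta sum.delta' finA finB sum.swap[of _ A B] cong: sum.cong_simp)
  also have "\<dots> = (\<Sum>a\<in>A. rho i a a * S X)"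
    unfolding S_def by (simp add: sum_distrib_left mult.assoc)
  also have "\<dots> = (\<Sum>a\<in>A. rho i a a) * S X"
    by (simp add: sum_distrib_right)
  finally show ?thesis using trA by simp
qed

lemma sumKK: "sum f (K \<times> K) = (\<Sum>x\<in>K. \<Sum>y\<in>K. f (x, y))"
  by (simp add: sum.cartesian_product split_def)

lemma sw_sw[simp]: "sw (sw p) = p"
  by (cases p) (simp add: sw_def)

lemma sw_KK: "p \<in> K \<times> K \<Longrightarrow> sw p \<in> K \<times> K"
  by (cases p) (simp add: sw_def K_upd K_A)

lemma sw_bij: "bij_betw sw (K \<times> K) (K \<times> K)"
  by (rule bij_betwI[of _ _ _ sw]) (auto simp: sw_KK)

lemma swsum: "(\<Sum>r\<in>K \<times> K. g (sw r)) = (\<Sum>r\<in>K \<times> K. g r)"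
  using sum.reindex_bij_betw[OF sw_bij, of g] by simp

lemma sw_eq: "(q = sw r) = (r = sw q)" by auto

lemma F_eq: "swap_op i p q = (if q = sw p then 1 else 0)"
  by (cases p; cases q) (simp add: swap_op_def sw_def)

lemma mmF_left: "p \<in> K \<times> K \<Longrightarrow> mmult (K \<times> K) (swap_op i) M p q = M (sw p) q"
  unfolding mmult_def F_eq using sw_KK[of p] finK by (simp add: if0_mult)

lemma mmF_right: "q \<in> K \<times> K \<Longrightarrow> mmult (K \<times> K) M (swap_op i) p q = M p (sw q)"
  unfolding mmult_def F_eq sw_eq[of q] using sw_KK[of q] finK by (simp add: mult_if0)

lemma SS_sw: "tensor_op sig sig (sw p) (sw q) = tensor_op sig sig p q"
proof (cases p; cases q)
  fix x y x' y' assume pq: "p = (x, y)" "q = (x', y')"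
  have "tensor_op sig sig (sw p) (sw q) = sig (x(i:=y i)) (x'(i:=y' i)) * sig (y(i:=x i)) (y'(i:=x' i))"
    unfolding pq sw_def tensor_op_def by simp
  also have "\<dots> = tensor_op sig sig p q"
    unfolding pq tensor_op_def sig_upd by (simp add: sig_eq[of x] sig_eq[of y] mult_ac)
  finally show ?thesis .
qed

lemma SSsym: "(\<Sum>p\<in>K\<times>K. \<Sum>q\<in>K\<times>K. tensor_op sig sig p q * h (sw q) (sw p))
   = (\<Sum>p\<in>K\<times>K. \<Sum>q\<in>K\<times>K. tensor_op sig sig p q * h q p)"
proof -
  have "(\<Sum>p\<in>K\<times>K. \<Sum>q\<in>K\<times>K. tensor_op sig sig p q * h (sw q) (sw p))
     = (\<Sum>p\<in>K\<times>K. \<Sum>q\<in>K\<times>K. tensor_op sig sig (sw p) q * h (sw q) p)"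
    using swsum[of "\<lambda>p. \<Sum>q\<in>K\<times>K. tensor_op sig sig (sw p) q * h (sw q) p"] by simp
  also have "\<dots> = (\<Sum>p\<in>K\<times>K. \<Sum>q\<in>K\<times>K. tensor_op sig sig (sw p) (sw q) * h q p)"
    using swsum[of "\<lambda>q. tensor_op sig sig (sw _) q * h (sw q) _"] by simp
  finally show ?thesis by (simp add: SS_sw)
qed

lemma L_y: "(\<Sum>y\<in>K. sig y (y(i:=c)) * g (y i)) = (\<Sum>b\<in>A. rho i b c * g b)"
proof -
  have "(\<Sum>y\<in>K. sig y (y(i:=c)) * g (y i)) = (\<Sum>b\<in>A. \<Sum>v\<in>B. rho i b c * tau v v * g b)"
    unfolding dec by (simp add: sig_upd)
  also have "\<dots> = (\<Sum>b\<in>A. rho i b c * g b * (\<Sum>v\<in>B. tau v v))"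
    by (simp add: sum_distrib_left mult_ac)
  finally show ?thesis by (simp add: tr_tau)
qed

lemma T1: "(\<Sum>p\<in>K\<times>K. \<Sum>q\<in>K\<times>K. tensor_op sig sig p q *
     (\<Sum>r\<in>K\<times>K. tensor_op X id_op q r * tensor_op X id_op r p)) = expect K sig (mmult K X X)"
proof -
  have "(\<Sum>p\<in>K\<times>K. \<Sum>q\<in>K\<times>K. tensor_op sig sig p q *
     (\<Sum>r\<in>K\<times>K. tensor_op X id_op q r * tensor_op X id_op r p)) =
    (\<Sum>x\<in>K. \<Sum>y\<in>K. \<Sum>x'\<in>K. sig x x' * sig y y * (\<Sum>x1\<in>K. X x' x1 * X x1 x))"
    unfolding sumKK tensor_op_def id_op_def
    by (simp add: mult_if0 if0_mult sum_if0 sum.delta sum.delta' finK cong: sum.cong_simp)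
  also have "\<dots> = (\<Sum>x\<in>K. \<Sum>x'\<in>K. \<Sum>y\<in>K. sig x x' * sig y y * (\<Sum>x1\<in>K. X x' x1 * X x1 x))"
    by (rule sum.cong[OF refl], rule sum.swap)
  also have "\<dots> = (\<Sum>x\<in>K. \<Sum>x'\<in>K. sig x x' * (\<Sum>x1\<in>K. X x' x1 * X x1 x) * (\<Sum>y\<in>K. sig y y))"
  proof (rule sum.cong[OF refl], rule sum.cong[OF refl])
    fix x x'
    let ?W = "\<Sum>x1\<in>K. X x' x1 * X x1 x"
    have "(\<Sum>y\<in>K. sig x x' * sig y y * ?W) = (\<Sum>y\<in>K. (sig x x' * ?W) * sig y y)"
      by (simp only: mult_ac)
    also have "\<dots> = (sig x x' * ?W) * (\<Sum>y\<in>K. sig y y)"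
      by (rule sum_distrib_left[symmetric])
    finally show "(\<Sum>y\<in>K. sig x x' * sig y y * ?W) = sig x x' * ?W * (\<Sum>y\<in>K. sig y y)" .
  qed
  finally show ?thesis by (simp add: tr_sig expect_mm)
qed

lemma Q4form: "expect (K\<times>K) (tensor_op sig sig)
   (mmult (K\<times>K) (mmult (K\<times>K) (tensor_op X id_op) (swap_op i)) (mmult (K\<times>K) (tensor_op X id_op) (swap_op i)))
    = (\<Sum>p\<in>K\<times>K. \<Sum>q\<in>K\<times>K. tensor_op sig sig p q * (\<Sum>r\<in>K\<times>K. tensor_op X id_op q (sw r) * tensor_op X id_op r (sw p)))"
    unfolding expect_mm by (simp add: mmF_right cong: sum.cong_simp)

lemma Q4: "expect (K\<times>K) (tensor_op sig sig)
   (mmult (K\<times>K) (mmult (K\<times>K) (tensor_op X id_op) (swap_op i)) (mmult (K\<times>K) (tensor_op X id_op) (swap_op i)))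
   = S X"
proof -
  let ?XI = "tensor_op X id_op"
  have "expect (K\<times>K) (tensor_op sig sig)
   (mmult (K\<times>K) (mmult (K\<times>K) ?XI (swap_op i)) (mmult (K\<times>K) ?XI (swap_op i)))
    = (\<Sum>p\<in>K\<times>K. \<Sum>q\<in>K\<times>K. tensor_op sig sig p q * (\<Sum>r\<in>K\<times>K. ?XI q (sw r) * ?XI r (sw p)))"
    unfolding expect_mm by (simp add: mmF_right cong: sum.cong_simp)
  also have "\<dots> = (\<Sum>x\<in>K. \<Sum>y\<in>K. \<Sum>x'\<in>K. \<Sum>y'\<in>K. sig x x' * sig y y' *
      (\<Sum>x1\<in>K. X x' (x1(i:=x i)) * (if y' = y(i:=x1 i) then 1 else 0) * X x1 (x(i:=y i))))"
    unfolding sumKK tensor_op_def id_op_def sw_def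
    apply (simp add: mult_if0 if0_mult sum_if0 sum.delta sum.delta' finK K_upd K_A cong: sum.cong_simp)
    apply (simp only: mult_1_right fun_upd_same)
    done
  also have "\<dots> = (\<Sum>x\<in>K. \<Sum>y\<in>K. \<Sum>x'\<in>K. \<Sum>x1\<in>K. sig x x' * sig y (y(i:=x1 i)) * X x' (x1(i:=x i)) * X x1 (x(i:=y i)))"
  proof (rule sum.cong[OF refl], rule sum.cong[OF refl], rule sum.cong[OF refl])
    fix x y x' assume xy: "x \<in> K" "y \<in> K" "x' \<in> K"
    have "(\<Sum>y'\<in>K. sig x x' * sig y y' *
      (\<Sum>x1\<in>K. X x' (x1(i:=x i)) * (if y' = y(i:=x1 i) then 1 else 0) * X x1 (x(i:=y i))))
      = (\<Sum>y'\<in>K. \<Sum>x1\<in>K. sig x x' * sig y y' * (X x' (x1(i:=x i)) * (if y' = y(i:=x1 i) then 1 else 0) * X x1 (x(i:=y i))))"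
      by (simp add: sum_distrib_left)
    also have "\<dots> = (\<Sum>x1\<in>K. \<Sum>y'\<in>K. sig x x' * sig y y' * (X x' (x1(i:=x i)) * (if y' = y(i:=x1 i) then 1 else 0) * X x1 (x(i:=y i))))"
      by (rule sum.swap)
    also have "\<dots> = (\<Sum>x1\<in>K. sig x x' * sig y (y(i:=x1 i)) * X x' (x1(i:=x i)) * X x1 (x(i:=y i)))"
      using xy by (simp add: mult_if0 if0_mult sum.delta sum.delta' finK K_upd K_A mult_ac cong: sum.cong_simp)
    finally show "(\<Sum>y'\<in>K. sig x x' * sig y y' *
      (\<Sum>x1\<in>K. X x' (x1(i:=x i)) * (if y' = y(i:=x1 i) then 1 else 0) * X x1 (x(i:=y i))))
      = (\<Sum>x1\<in>K. sig x x' * sig y (y(i:=x1 i)) * X x' (x1(i:=x i)) * X x1 (x(i:=y i)))" .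
  qed
  also have "\<dots> = (\<Sum>x\<in>K. \<Sum>x'\<in>K. \<Sum>x1\<in>K. \<Sum>y\<in>K. sig x x' * sig y (y(i:=x1 i)) * X x' (x1(i:=x i)) * X x1 (x(i:=y i)))"
    by (rule perm4b)
  also have "\<dots> = (\<Sum>x\<in>K. \<Sum>x'\<in>K. \<Sum>x1\<in>K. sig x x' * X x' (x1(i:=x i)) * (\<Sum>b\<in>A. rho i b (x1 i) * X x1 (x(i:=b))))"
  proof (rule sum.cong[OF refl], rule sum.cong[OF refl], rule sum.cong[OF refl])
    fix x x' x1
    have "(\<Sum>y\<in>K. sig x x' * sig y (y(i:=x1 i)) * X x' (x1(i:=x i)) * X x1 (x(i:=y i)))
      = sig x x' * X x' (x1(i:=x i)) * (\<Sum>y\<in>K. sig y (y(i:=x1 i)) * X x1 (x(i:=y i)))"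
      by (simp add: sum_distrib_left mult_ac)
    then show "(\<Sum>y\<in>K. sig x x' * sig y (y(i:=x1 i)) * X x' (x1(i:=x i)) * X x1 (x(i:=y i)))
      = sig x x' * X x' (x1(i:=x i)) * (\<Sum>b\<in>A. rho i b (x1 i) * X x1 (x(i:=b)))"
      using L_y[of "x1 i" "\<lambda>b. X x1 (x(i:=b))"] by simp
  qed
  also have "\<dots> = (\<Sum>x\<in>K. \<Sum>x'\<in>K. sig x x' * (\<Sum>w\<in>B. X x' (w(i:=x i)) * Y X w x))"
  proof (rule sum.cong[OF refl], rule sum.cong[OF refl])
    fix x x'
    have "(\<Sum>x1\<in>K. X x' (x1(i:=x i)) * (\<Sum>b\<in>A. rho i b (x1 i) * X x1 (x(i:=b))))
        = (\<Sum>c\<in>A. \<Sum>w\<in>B. X x' (w(i:=x i)) * (\<Sum>b\<in>A. rho i b c * X (w(i:=c)) (x(i:=b))))"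
      unfolding dec by simp
    also have "\<dots> = (\<Sum>w\<in>B. \<Sum>c\<in>A. X x' (w(i:=x i)) * (\<Sum>b\<in>A. rho i b c * X (w(i:=c)) (x(i:=b))))"
      by (rule sum.swap)
    also have "\<dots> = (\<Sum>w\<in>B. X x' (w(i:=x i)) * (\<Sum>c\<in>A. \<Sum>b\<in>A. rho i b c * X (w(i:=c)) (x(i:=b))))"
      by (simp add: sum_distrib_left)
    also have "\<dots> = (\<Sum>w\<in>B. X x' (w(i:=x i)) * Y X w x)"
      unfolding Y_def by (subst sum.swap) (rule refl)
    finally have eq: "(\<Sum>x1\<in>K. X x' (x1(i:=x i)) * (\<Sum>b\<in>A. rho i b (x1 i) * X x1 (x(i:=b))))
       = (\<Sum>w\<in>B. X x' (w(i:=x i)) * Y X w x)" .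
    then show "(\<Sum>x1\<in>K. sig x x' * X x' (x1(i:=x i)) * (\<Sum>b\<in>A. rho i b (x1 i) * X x1 (x(i:=b))))
       = sig x x' * (\<Sum>w\<in>B. X x' (w(i:=x i)) * Y X w x)"
      by (simp only: mult.assoc sum_distrib_left[symmetric] eq)
  qed
  also have "\<dots> = (\<Sum>a\<in>A. \<Sum>u\<in>B. \<Sum>b\<in>A. \<Sum>v\<in>B. rho i a b * tau u v * (\<Sum>w\<in>B. X (v(i:=b)) (w(i:=a)) * Y X w u))"
    unfolding dec by (simp add: sig_upd Y_upd)
  also have "\<dots> = S X" by (rule S_alt)
  finally show ?thesis .
qed

lemma expect_eq: "expect T s M = (\<Sum>x\<in>T. \<Sum>z\<in>T. s x z * M z x)"
  unfolding expect_def mtrace_def mmult_def by (simp add: sum_distrib_left)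

lemma part1: "expect K sig (mmult K (diff_op d rho i X) (diff_op d rho i X)) = expect K sig (mmult K X X) - S X"
proof -
  let ?E = "cond_exp d rho i X"
  have pw: "mmult K (diff_op d rho i X) (diff_op d rho i X) z x =
     mmult K X X z x - mmult K X ?E z x - mmult K ?E X z x + mmult K ?E ?E z x" for z x
    unfolding mmult_def diff_op_def by (simp add: algebra_simps sum_subtractf sum.distrib)
  have "expect K sig (mmult K (diff_op d rho i X) (diff_op d rho i X)) =
    expect K sig (mmult K X X) - expect K sig (mmult K X ?E) - expect K sig (mmult K ?E X) + expect K sig (mmult K ?E ?E)"
    unfolding expect_eq pw by (simp add: algebra_simps sum_subtractf sum.distrib)
  then show ?thesis by (simp add: E1 E2 E3)
qed

lemma part2:
  fixes X :: "midx op"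
  defines "XI \<equiv> tensor_op X id_op"
  defines "Z \<equiv> (\<lambda>u v. XI u v - mmult (K\<times>K) (mmult (K\<times>K) (swap_op i) XI) (swap_op i) u v)"
  shows "expect (K\<times>K) (tensor_op sig sig) (\<lambda>a b. (1/2) * mmult (K\<times>K) Z Z a b) = expect K sig (mmult K X X) - S X"
proof -
  let ?SS = "tensor_op sig sig"
  define a1 where "a1 q p = (\<Sum>r\<in>K\<times>K. XI q r * XI r p)" for q p
  define a2 where "a2 q p = (\<Sum>r\<in>K\<times>K. XI q (sw r) * XI r (sw p))" for q p
  have Zeq: "Z q r = XI q r - XI (sw q) (sw r)" if "q \<in> K\<times>K" "r \<in> K\<times>K" for q r
    unfolding Z_def using that by (simp add: mmF_right mmF_left)
  have pw: "mmult (K\<times>K) Z Z q p = a1 q p - a2 q p - a2 (sw q) (sw p) + a1 (sw q) (sw p)"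
    if "q \<in> K\<times>K" "p \<in> K\<times>K" for q p
  proof -
    have "mmult (K\<times>K) Z Z q p = (\<Sum>r\<in>K\<times>K. (XI q r - XI (sw q) (sw r)) * (XI r p - XI (sw r) (sw p)))"
      unfolding mmult_def using that by (intro sum.cong refl) (simp add: Zeq)
    also have "\<dots> = a1 q p - (\<Sum>r\<in>K\<times>K. XI q r * XI (sw r) (sw p)) - (\<Sum>r\<in>K\<times>K. XI (sw q) (sw r) * XI r p)
         + (\<Sum>r\<in>K\<times>K. XI (sw q) (sw r) * XI (sw r) (sw p))"
      unfolding a1_def by (simp add: algebra_simps sum_subtractf sum.distrib)
    also have "(\<Sum>r\<in>K\<times>K. XI q r * XI (sw r) (sw p)) = a2 q p"
      unfolding a2_def using swsum[of "\<lambda>r. XI q (sw r) * XI r (sw p)"] by simp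
    also have "(\<Sum>r\<in>K\<times>K. XI (sw q) (sw r) * XI r p) = a2 (sw q) (sw p)"
      unfolding a2_def by simp
    also have "(\<Sum>r\<in>K\<times>K. XI (sw q) (sw r) * XI (sw r) (sw p)) = a1 (sw q) (sw p)"
      unfolding a1_def using swsum[of "\<lambda>r. XI (sw q) r * XI r (sw p)"] by simp
    finally show ?thesis .
  qed
  have "expect (K\<times>K) ?SS (\<lambda>a b. (1/2) * mmult (K\<times>K) Z Z a b) =
     (\<Sum>p\<in>K\<times>K. \<Sum>q\<in>K\<times>K. ?SS p q * ((1/2) * (a1 q p - a2 q p - a2 (sw q) (sw p) + a1 (sw q) (sw p))))"
    unfolding expect_eq by (intro sum.cong refl) (simp add: pw)
  also have "\<dots> = (1/2) * ((\<Sum>p\<in>K\<times>K. \<Sum>q\<in>K\<times>K. ?SS p q * a1 q p) - (\<Sum>p\<in>K\<times>K. \<Sum>q\<in>K\<times>K. ?SS p q * a2 q p)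
      - (\<Sum>p\<in>K\<times>K. \<Sum>q\<in>K\<times>K. ?SS p q * a2 (sw q) (sw p)) + (\<Sum>p\<in>K\<times>K. \<Sum>q\<in>K\<times>K. ?SS p q * a1 (sw q) (sw p)))"
    by (simp add: algebra_simps sum_subtractf sum.distrib sum_distrib_left)
  also have "\<dots> = (\<Sum>p\<in>K\<times>K. \<Sum>q\<in>K\<times>K. ?SS p q * a1 q p) - (\<Sum>p\<in>K\<times>K. \<Sum>q\<in>K\<times>K. ?SS p q * a2 q p)"
    by (simp add: SSsym[of a1] SSsym[of a2])
  also have "(\<Sum>p\<in>K\<times>K. \<Sum>q\<in>K\<times>K. ?SS p q * a1 q p) = expect K sig (mmult K X X)"
    unfolding a1_def XI_def by (rule T1)
  also have "(\<Sum>p\<in>K\<times>K. \<Sum>q\<in>K\<times>K. ?SS p q * a2 q p) = S X"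
    unfolding a2_def XI_def by (simp add: Q4form[symmetric] Q4)
  finally show ?thesis .
qed
end

theorem proposition6p5:
  fixes n :: nat and d :: "nat \<Rightarrow> nat" and rho :: "nat \<Rightarrow> nat op"
    and X :: "midx op" and i :: nat
  assumes rho: "\<And>j. j < n \<Longrightarrow> density_on {..<d j} (rho j)"
    and X: "hermitian_on (Idx d n) X"
    and i: "i < n"
  shows "let K = Idx d n; KK = Idx d n \<times> Idx d n; \<sigma> = prod_state n rho;
             XI = tensor_op X id_op; F = swap_op i; DX = diff_op d rho i X;
             Z = (\<lambda>u v. XI u v - mmult KK (mmult KK F XI) F u v)
         in expect K \<sigma> (mmult K DX DX)
              = expect KK (tensor_op \<sigma> \<sigma>) (\<lambda>a b. (1/2) * mmult KK Z Z a b)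
          \<and> expect KK (tensor_op \<sigma> \<sigma>) (\<lambda>a b. (1/2) * mmult KK Z Z a b)
              = expect K \<sigma> (mmult K X X)
                - expect KK (tensor_op \<sigma> \<sigma>) (mmult KK (mmult KK XI F) (mmult KK XI F))"
proof -
  interpret pst n d rho i
  proof
    show "i < n" by (rule i)
    fix j assume "j < n"
    then show "(\<Sum>a<d j. rho j a a) = 1"
      using rho[of j] unfolding density_on_def mtrace_def by simp
  qed
  show ?thesis
    unfolding Let_def K_def[symmetric] sig_def[symmetric]
    by (simp only: part1 part2 Q4)
qed

end
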